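(* Let $n\ge2$ and let $\tau=(\tau^1,\dots,\tau^n)$ be an $\mathbf R^n$-valued random variable taking exactly $n+1$ distinct values, each with positive probability, such that $\mathbf E[\tau^i]=0$ for $i=1,\dots,n$ and $\mathbf E[\tau^i\tau^j]=\delta_{ij}$ for $i,j=1,\dots,n$. Then there exists $(i,j,k)\in\{1,\dots,n\}^3$ with $\mathbf E[\tau^i\tau^j\tau^k]\ne0$. *)

theory Defs
  imports "HOL-Probability.Probability"
begin

end

theory Submission imports Defs begin

lemma integral_fin:
  fixes \<tau> :: "'a \<Rightarrow> real ^ 'n"
  assumes "prob_space M" "\<tau> \<in> borel_measurable M" "finite (\<tau> ` space M)"
  shows "(\<integral>\<omega>. f (\<tau> \<omega>) \<partial>M) = (\<Sum>v\<in>\<tau> ` space M. measure M {\<omega>\<in>space M. \<tau> \<omega> = v} * f v)"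
proof -
  interpret prob_space M by fact
  have meas: "{\<omega>\<in>space M. \<tau> \<omega> = v} \<in> sets M" for v
    using assms(2) by measurable
  have eq: "f (\<tau> \<omega>) = (\<Sum>v\<in>\<tau> ` space M. indicator {\<omega>\<in>space M. \<tau> \<omega> = v} \<omega> * f v)"
    if "\<omega> \<in> space M" for \<omega>
  proof -
    have "(\<Sum>v\<in>\<tau> ` space M. indicator {\<omega>\<in>space M. \<tau> \<omega> = v} \<omega> * f v)
        = (\<Sum>v\<in>\<tau> ` space M. if \<tau> \<omega> = v then f v else 0)"
      using that by (intro sum.cong) (auto simp: indicator_def)
    also have "\<dots> = f (\<tau> \<omega>)" using that assms(3) by (simp add: sum.delta)
    finally show ?thesis by simp
  qed
  have hb: "has_bochner_integral M (\<lambda>\<omega>. \<Sum>v\<in>\<tau> ` space M. indicator {\<omega>\<in>space M. \<tau> \<omega> = v} \<omega> * f v)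
      (\<Sum>v\<in>\<tau> ` space M. measure M {\<omega>\<in>space M. \<tau> \<omega> = v} * f v)"
    by (intro has_bochner_integral_sum has_bochner_integral_mult_left has_bochner_integral_real_indicator meas) (auto simp: less_top[symmetric])
  have "(\<integral>\<omega>. f (\<tau> \<omega>) \<partial>M) = (\<integral>\<omega>. (\<Sum>v\<in>\<tau> ` space M. indicator {\<omega>\<in>space M. \<tau> \<omega> = v} \<omega> * f v) \<partial>M)"
    using eq by (intro Bochner_Integration.integral_cong) auto
  also have "\<dots> = (\<Sum>v\<in>\<tau> ` space M. measure M {\<omega>\<in>space M. \<tau> \<omega> = v} * f v)"
    using hb by (rule has_bochner_integral_integral_eq)
  finally show ?thesis .
qed

lemma lin:
  fixes a :: "real ^ 'n"
  shows "(\<Sum>v\<in>S. w v * (a \<bullet> v)) = (\<Sum>i\<in>UNIV. a$i * (\<Sum>v\<in>S. w v * v$i))"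
  by (simp add: inner_vec_def sum_distrib_left sum.swap[of _ S] mult.assoc mult.left_commute)


theorem lemma6p1:
  fixes M :: "'a measure" and \<tau> :: "'a \<Rightarrow> real ^ 'n"
  assumes "prob_space M"
    and "CARD('n) \<ge> 2"
    and "\<tau> \<in> borel_measurable M"
    and "finite (\<tau> ` space M)"
    and "card (\<tau> ` space M) = CARD('n) + 1"
    and "\<forall>v \<in> \<tau> ` space M. measure M {\<omega> \<in> space M. \<tau> \<omega> = v} > 0"
    and "\<forall>i. (\<integral>\<omega>. \<tau> \<omega> $ i \<partial>M) = 0"
    and "\<forall>i j. (\<integral>\<omega>. \<tau> \<omega> $ i * \<tau> \<omega> $ j \<partial>M) = (if i = j then 1 else 0)"
  shows "\<exists>i j k. (\<integral>\<omega>. \<tau> \<omega> $ i * \<tau> \<omega> $ j * \<tau> \<omega> $ k \<partial>M) \<noteq> 0"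
proof (rule ccontr)
  assume H: "\<not> ?thesis"
  define S where "S = \<tau> ` space M"
  define p where "p v = measure M {\<omega> \<in> space M. \<tau> \<omega> = v}" for v
  have fin: "finite S" using assms(4) S_def by simp
  have ppos: "\<And>v. v \<in> S \<Longrightarrow> p v > 0" using assms(6) unfolding S_def p_def by auto
  have E: "\<And>f. (\<integral>\<omega>. f (\<tau> \<omega>) \<partial>M) = (\<Sum>v\<in>S. p v * f v)"
    unfolding S_def p_def by (rule integral_fin[OF assms(1,3,4)])
  have P0: "(\<Sum>v\<in>S. p v) = 1"
    using E[of "\<lambda>v. 1"] prob_space.prob_space[OF assms(1)] by simp
  have M1: "\<And>i. (\<Sum>v\<in>S. p v * v$i) = 0"
    using assms(7) E[of "\<lambda>v. v$i" for i] by simp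
  have M2: "\<And>i j. (\<Sum>v\<in>S. p v * (v$i * v$j)) = (if i = j then 1 else 0)"
    using assms(8) E[of "\<lambda>v. v$i * v$j" for i j] by simp
  have M3: "\<And>i j k. (\<Sum>v\<in>S. p v * (v$i * v$j * v$k)) = 0"
    using H E[of "\<lambda>v. v$i * v$j * v$k" for i j k] by simp
  have L1: "\<And>a. (\<Sum>v\<in>S. p v * (a \<bullet> v)) = 0"
    by (simp add: lin M1)
  have L2: "\<And>a j. (\<Sum>v\<in>S. p v * v$j * (a \<bullet> v)) = a$j"
  proof -
    fix a :: "real^'n" and j
    have "(\<Sum>v\<in>S. p v * v$j * (a \<bullet> v)) = (\<Sum>i\<in>UNIV. a$i * (\<Sum>v\<in>S. p v * v$j * v$i))"
      by (rule lin)
    also have "\<dots> = (\<Sum>i\<in>UNIV. a$i * (if i = j then 1 else 0))"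
      using M2 by (simp add: mult.commute mult.left_commute)
    also have "\<dots> = a$j" by (simp add: if_distrib cong: if_cong)
    finally show "(\<Sum>v\<in>S. p v * v$j * (a \<bullet> v)) = a$j" .
  qed
  have L2': "\<And>a b. (\<Sum>v\<in>S. p v * (a \<bullet> v) * (b \<bullet> v)) = a \<bullet> b"
  proof -
    fix a b :: "real^'n"
    have "(\<Sum>v\<in>S. p v * (a \<bullet> v) * (b \<bullet> v)) = (\<Sum>i\<in>UNIV. b$i * (\<Sum>v\<in>S. p v * (a \<bullet> v) * v$i))"
      by (rule lin)
    also have "\<dots> = (\<Sum>i\<in>UNIV. b$i * a$i)"
      using L2 by (simp add: mult.commute mult.left_commute)
    also have "\<dots> = a \<bullet> b" by (simp add: inner_vec_def mult.commute)
    finally show "(\<Sum>v\<in>S. p v * (a \<bullet> v) * (b \<bullet> v)) = a \<bullet> b" .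
  qed
  have L3a: "\<And>a j k. (\<Sum>v\<in>S. p v * v$j * v$k * (a \<bullet> v)) = 0"
    by (subst lin) (simp add: M3[unfolded mult.assoc] mult.assoc)
  have L3b: "\<And>a b k. (\<Sum>v\<in>S. p v * v$k * (a \<bullet> v) * (b \<bullet> v)) = 0"
  proof -
    fix a b :: "real^'n" and k
    have "(\<Sum>v\<in>S. p v * v$k * (a \<bullet> v) * (b \<bullet> v)) = (\<Sum>i\<in>UNIV. b$i * (\<Sum>v\<in>S. p v * v$k * (a \<bullet> v) * v$i))"
      by (rule lin)
    also have "\<dots> = 0" using L3a by (simp add: mult.commute mult.left_commute)
    finally show "(\<Sum>v\<in>S. p v * v$k * (a \<bullet> v) * (b \<bullet> v)) = 0" .
  qed
  have L3: "\<And>a. (\<Sum>v\<in>S. p v * (a \<bullet> v) ^ 3) = 0"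
  proof -
    fix a :: "real^'n"
    have "(\<Sum>v\<in>S. p v * (a \<bullet> v) ^ 3) = (\<Sum>v\<in>S. (p v * (a \<bullet> v) * (a \<bullet> v)) * (a \<bullet> v))"
      by (simp add: power3_eq_cube mult.assoc)
    also have "\<dots> = (\<Sum>i\<in>UNIV. a$i * (\<Sum>v\<in>S. (p v * (a \<bullet> v) * (a \<bullet> v)) * v$i))"
      by (rule lin)
    also have "\<dots> = 0" using L3b by (simp add: mult.commute mult.left_commute)
    finally show "(\<Sum>v\<in>S. p v * (a \<bullet> v) ^ 3) = 0" .
  qed
  have cardS: "card S \<ge> 3" using assms(2,5) S_def by simp
  have half: "p s = 1/2" if sS: "s \<in> S" for s
  proof -
    define D where "D = (\<lambda>r. r - s) ` (S - {s})"
    have injD: "inj_on (\<lambda>r. r - s) (S - {s})" by (auto simp: inj_on_def)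
    have finD: "finite D" using fin D_def by simp
    have cardD: "card D = CARD('n)"
      using card_image[OF injD] fin sS assms(5) S_def D_def by simp
    have spanD: "span D = UNIV"
    proof (rule ccontr)
      assume "span D \<noteq> UNIV"
      then obtain a :: "real^'n" where a0: "a \<noteq> 0" and aD: "\<forall>x\<in>span D. a \<bullet> x = 0"
        using span_not_UNIV_orthogonal by blast
      have ar: "a \<bullet> r = a \<bullet> s" if "r \<in> S" for r
      proof (cases "r = s")
        case False
        then have "r - s \<in> span D" using that D_def by (intro span_base) auto
        then have "a \<bullet> (r - s) = 0" using aD by blast
        then show ?thesis by (simp add: inner_diff_right)
      qed simp
      have "(\<Sum>r\<in>S. p r * (a \<bullet> r)) = (\<Sum>r\<in>S. p r * (a \<bullet> s))"
        using ar by (intro sum.cong) auto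
      then have as0: "a \<bullet> s = 0" using L1[of a] P0 by (simp add: sum_distrib_right[symmetric])
      have "a \<bullet> a = (\<Sum>r\<in>S. p r * (a \<bullet> r) * (a \<bullet> r))" using L2'[of a a] by simp
      also have "\<dots> = 0" using ar as0 by (intro sum.neutral) auto
      finally show False using a0 by simp
    qed
    have indep: "independent D"
      by (rule card_le_dim_spanning[of D UNIV]) (auto simp: spanD finD cardD)
    define d where "d r = p r * (1 + s \<bullet> r)" for r
    have K1: "(\<Sum>r\<in>S. d r) = 1"
      using P0 L1[of s] by (simp add: d_def distrib_left sum.distrib)
    have K2: "(\<Sum>r\<in>S. d r * r$j) = s$j" for j
      using M1[of j] L2[of j s] by (simp add: d_def distrib_left distrib_right sum.distrib mult.commute mult.left_commute)
    have K1': "d s + (\<Sum>r\<in>S-{s}. d r) = 1" using K1 sum.remove[OF fin sS, of d] by simp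
    have K2': "d s * s$j + (\<Sum>r\<in>S-{s}. d r * r$j) = s$j" for j
      using K2[of j] sum.remove[OF fin sS, of "\<lambda>r. d r * r$j"] by simp
    have Z: "(\<Sum>x\<in>D. d (x + s) *\<^sub>R x) = 0"
    proof -
      have "(\<Sum>x\<in>D. d (x + s) *\<^sub>R x) = (\<Sum>r\<in>S-{s}. d r *\<^sub>R (r - s))"
        unfolding D_def by (subst sum.reindex[OF injD]) simp
      also have "\<dots> = 0"
      proof (subst vec_eq_iff, intro allI)
        fix j
        have "(\<Sum>r\<in>S-{s}. d r *\<^sub>R (r - s)) $ j = (\<Sum>r\<in>S-{s}. d r * r$j) - (\<Sum>r\<in>S-{s}. d r) * s$j"
          by (simp add: sum_component right_diff_distrib sum_subtractf sum_distrib_right)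
        also have "\<dots> = 0"
        proof -
          have h: "(\<Sum>r\<in>S-{s}. d r) = 1 - d s" using K1' by simp
          have h2: "(\<Sum>r\<in>S-{s}. d r * r$j) = s$j - d s * s$j" using K2'[of j] by simp
          show ?thesis unfolding h h2 by (simp add: algebra_simps)
        qed
        finally show "(\<Sum>r\<in>S-{s}. d r *\<^sub>R (r - s)) $ j = 0 $ j" by simp
      qed
      finally show ?thesis .
    qed
    have dz: "d r = 0" if "r \<in> S - {s}" for r
    proof -
      have "\<forall>x\<in>D. d (x + s) = 0" proof -
        have "\<forall>c. (\<Sum>v\<in>D. c v *\<^sub>R v) = 0 \<longrightarrow> (\<forall>v\<in>D. c v = 0)"
          using indep unfolding independent_explicit by blast
        from spec[OF this, of "\<lambda>x. d (x + s)"] Z show ?thesis by blast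
      qed
      then show ?thesis using that D_def by auto
    qed
    have sr: "s \<bullet> r = -1" if "r \<in> S - {s}" for r
      using dz[OF that] ppos[of r] that unfolding d_def by auto
    have ds: "d s = 1" using K1' dz by simp
    define q where "q = s \<bullet> s"
    have q0: "q \<ge> 0" unfolding q_def by simp
    have e1: "p s * (1 + q) = 1" using ds unfolding d_def q_def .
    have rest: "(\<Sum>r\<in>S-{s}. p r) = 1 - p s" using P0 sum.remove[OF fin sS, of p] by simp
    have "(\<Sum>r\<in>S. p r * (s \<bullet> r) ^ 3) = p s * q^3 + (\<Sum>r\<in>S-{s}. p r * (s \<bullet> r) ^ 3)"
      using sum.remove[OF fin sS] q_def by simp
    also have "(\<Sum>r\<in>S-{s}. p r * (s \<bullet> r) ^ 3) = (\<Sum>r\<in>S-{s}. - p r)"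
      using sr by (intro sum.cong) auto
    finally have e2: "p s * q^3 = 1 - p s" using L3[of s] rest by (simp add: sum_negf)
    have "card (S - {s}) \<ge> 2" using cardS fin sS by simp
    then have "S - {s} \<noteq> {}" by (metis card.empty not_numeral_le_zero)
    then obtain r where r: "r \<in> S - {s}" by blast
    have "p r \<le> (\<Sum>r\<in>S-{s}. p r)"
      using r fin ppos by (intro member_le_sum) (auto intro: less_imp_le)
    then have pl: "p s < 1" using ppos[of r] r rest by simp
    have ps: "p s > 0" using ppos sS by simp
    have pq: "p s * q = 1 - p s" using e1 by (simp add: algebra_simps)
    have "p s * q > 0" using pq pl by simp
    then have qp: "q > 0" using ps by (simp add: zero_less_mult_iff)
    have "p s * q * (q^2 - 1) = p s * q^3 - p s * q" by (simp add: algebra_simps power2_eq_square power3_eq_cube)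
    also have "\<dots> = 0" using e2 pq by simp
    finally have "p s * q * (q^2 - 1) = 0" .
    then have "q^2 = 1" using ps qp by simp
    then have "q = 1" using qp by (simp add: power2_eq_1_iff)
    then show ?thesis using e1 by simp
  qed
  have "(\<Sum>v\<in>S. p v) = (\<Sum>v\<in>S. 1/2)" using half by (intro sum.cong) auto
  then have "real (card S) = 2" using P0 by simp
  then show False using cardS by simp
qed
end
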